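(* Let $(X,\mu)$ be a discrete-time BRW whose generating function satisfies $G(z|x)=\frac{1}{1+\sum_ym_{xy}(1-z(y))}$ for all $z\in[0,1]^X$, $x\in X$ (e.g. a BRW with independent diffusion and $\rho_x(n)=\frac{1}{1+\bar\rho_x}(\frac{\bar\rho_x}{1+\bar\rho_x})^n$). Then there is global survival starting from $x$ if and only if there exists $v\in[0,1]^X$ with $v(x)>0$ such that $Mv(y)\ge\frac{v(y)}{1-v(y)}$ for all $y\in X$; equivalently, if and only if there exists such $v$ with $Mv(y)=\frac{v(y)}{1-v(y)}$ for all $y$.
   Context: $S_X:=\{f:X\to\mathbb N:\sum_yf(y)<\infty\}$; a discrete-time BRW $(X,\mu)$: probability measures $\mu_x$ on $S_X$, each particle at $x$ independently replaced by $f(y)$ particles at each $y$, $f\sim\mu_x$. $m_{xy}:=\sum_ff(y)\mu_x(f)$ with $\sup_x\sum_ym_{xy}<\infty$, $Mv(y):=\sum_wm_{yw}v(w)$. $G(z|x):=\sum_f\mu_x(f)\prod_yz(y)^{f(y)}$. Convention: $a/0=+\infty$ for $a>0$. Global survival from $x$: with positive probability, starting from one particle at $x$, particles are present at every generation. *)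

theory Defs
  imports "HOL-Probability.Probability"
begin

text \<open>A discrete-time BRW on the vertex set 'x is given by
  mu :: 'x => 'x multiset pmf; the multiset f drawn from mu x is the offspring
  configuration of a particle at x (f = finitely supported map X -> N, count f y = f(y)).
  Configurations of the process are multisets of positions.\<close>

fun brw_step_list :: "('x \<Rightarrow> 'x multiset pmf) \<Rightarrow> 'x list \<Rightarrow> 'x multiset pmf" where
  "brw_step_list mu [] = return_pmf {#}"
| "brw_step_list mu (a # as) =
     bind_pmf (mu a) (\<lambda>f. map_pmf (\<lambda>g. f + g) (brw_step_list mu as))"

text \<open>One-generation transition kernel of the BRW (order of particles is irrelevant).\<close>
definition brw_step :: "('x \<Rightarrow> 'x multiset pmf) \<Rightarrow> 'x multiset \<Rightarrow> 'x multiset pmf" where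
  "brw_step mu eta = brw_step_list mu (SOME xs. mset xs = eta)"

fun brw_ext :: "('x \<Rightarrow> 'x multiset pmf) \<Rightarrow> nat \<Rightarrow> 'x multiset \<Rightarrow> real" where
  "brw_ext mu 0 eta = (if eta = {#} then 1 else 0)"
| "brw_ext mu (Suc n) eta = measure_pmf.expectation (brw_step mu eta) (brw_ext mu n)"

definition global_survival :: "('x \<Rightarrow> 'x multiset pmf) \<Rightarrow> 'x \<Rightarrow> bool" where
  "global_survival mu x \<longleftrightarrow> (SUP n. brw_ext mu n {#x#}) < 1"

definition brw_m :: "('x \<Rightarrow> 'x multiset pmf) \<Rightarrow> 'x \<Rightarrow> 'x \<Rightarrow> ennreal" where
  "brw_m mu x y = (\<integral>\<^sup>+ f. ennreal (real (count f y)) \<partial>measure_pmf (mu x))"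

definition brw_M :: "('x \<Rightarrow> 'x multiset pmf) \<Rightarrow> ('x \<Rightarrow> real) \<Rightarrow> 'x \<Rightarrow> ennreal" where
  "brw_M mu v y = (\<integral>\<^sup>+ w. brw_m mu y w * ennreal (v w) \<partial>count_space UNIV)"

definition brw_G :: "('x \<Rightarrow> 'x multiset pmf) \<Rightarrow> ('x \<Rightarrow> real) \<Rightarrow> 'x \<Rightarrow> real" where
  "brw_G mu z x = measure_pmf.expectation (mu x) (\<lambda>f. \<Prod>y\<in>set_mset f. z y ^ count f y)"

definition odds :: "real \<Rightarrow> ennreal" where
  "odds a = (if a = 1 then \<infinity> else ennreal (a / (1 - a)))"

end

theory Submission
  imports Defs
begin

definition Phi :: "('x \<Rightarrow> real) \<Rightarrow> 'x multiset \<Rightarrow> real" where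
  "Phi z f = prod_mset (image_mset z f)"

lemma Phi_add: "Phi z (f + g) = Phi z f * Phi z g"
  by (simp add: Phi_def)

lemma Phi_empty[simp]: "Phi z {#} = 1"
  by (simp add: Phi_def)

lemma Phi_bounds: assumes "\<forall>y. 0 \<le> z y \<and> z y \<le> 1" shows "0 \<le> Phi z f \<and> Phi z f \<le> 1"
proof (induction f)
  case empty then show ?case by simp
next
  case (add a f) then show ?case using assms
    by (simp add: Phi_def) (metis mult_le_one mult_nonneg_nonneg)
qed

lemma brw_G_Phi: "brw_G mu z w = measure_pmf.expectation (mu w) (Phi z)"
  unfolding brw_G_def Phi_def by (simp add: image_prod_mset_multiplicity)

lemma E_enn:
  fixes p :: "'a pmf" and h :: "'a \<Rightarrow> real"
  assumes "\<And>g. 0 \<le> h g \<and> h g \<le> 1"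
  shows "ennreal (measure_pmf.expectation p h) = (\<integral>\<^sup>+ g. ennreal (h g) \<partial>p)"
proof -
  have "integrable (measure_pmf p) h"
    by (rule measure_pmf.integrable_const_bound[where B=1]) (use assms in auto)
  then show ?thesis using assms by (simp add: nn_integral_eq_integral)
qed

lemma E_bounds:
  fixes p :: "'a pmf" and h :: "'a \<Rightarrow> real"
  assumes "\<And>g. 0 \<le> h g \<and> h g \<le> 1"
  shows "0 \<le> measure_pmf.expectation p h \<and> measure_pmf.expectation p h \<le> 1"
proof -
  have "integrable (measure_pmf p) h"
    by (rule measure_pmf.integrable_const_bound[where B=1]) (use assms in auto)
  moreover have "measure_pmf.expectation p h \<le> measure_pmf.expectation p (\<lambda>_. 1)"
    by (rule integral_mono) (use assms calculation in auto)
  ultimately show ?thesis using assms by (simp add: integral_nonneg)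
qed

lemma L:
  assumes "\<forall>y. 0 \<le> z y \<and> z y \<le> 1"
  shows "(\<integral>\<^sup>+ g. ennreal (Phi z g) \<partial>brw_step_list mu xs) =
     prod_list (map (\<lambda>a. \<integral>\<^sup>+ f. ennreal (Phi z f) \<partial>mu a) xs)"
proof (induction xs)
  case Nil then show ?case by simp
next
  case (Cons a xs)
  have "(\<integral>\<^sup>+ g. ennreal (Phi z g) \<partial>brw_step_list mu (a # xs)) =
     (\<integral>\<^sup>+ f. \<integral>\<^sup>+ g. ennreal (Phi z f) * ennreal (Phi z g) \<partial>brw_step_list mu xs \<partial>mu a)"
    using Phi_bounds[OF assms] by (simp add: Phi_add ennreal_mult)
  also have "\<dots> = (\<integral>\<^sup>+ f. ennreal (Phi z f) * (\<integral>\<^sup>+ g. ennreal (Phi z g) \<partial>brw_step_list mu xs) \<partial>mu a)"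
    by (simp add: nn_integral_cmult)
  also have "\<dots> = (\<integral>\<^sup>+ f. ennreal (Phi z f) \<partial>mu a) * (\<integral>\<^sup>+ g. ennreal (Phi z g) \<partial>brw_step_list mu xs)"
    by (simp add: nn_integral_multc)
  finally show ?case using Cons by simp
qed

lemma prod_mset_nonneg':
  assumes "\<And>a. 0 \<le> (e a::real)"
  shows "0 \<le> prod_mset (image_mset e g)"
  by (induction g) (simp_all add: assms)

lemma ennreal_prod_mset:
  assumes "\<And>a. 0 \<le> e a"
  shows "prod_mset (image_mset (\<lambda>a. ennreal (e a)) g) = ennreal (prod_mset (image_mset e g))"
  by (induction g) (simp_all add: assms ennreal_mult prod_mset_nonneg')


lemma brw_mult:
  "(\<forall>g. brw_ext mu n g = Phi (\<lambda>w. brw_ext mu n {#w#}) g) \<and>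
   (\<forall>w. 0 \<le> brw_ext mu n {#w#} \<and> brw_ext mu n {#w#} \<le> 1)"
proof (induction n)
  case 0
  have "brw_ext mu 0 g = Phi (\<lambda>w. brw_ext mu 0 {#w#}) g" for g
    by (cases g) (simp_all add: Phi_def)
  then show ?case by simp
next
  case (Suc n)
  define z where "z = (\<lambda>w. brw_ext mu n {#w#})"
  have zb: "\<forall>y. 0 \<le> z y \<and> z y \<le> 1" using Suc unfolding z_def by blast
  have IH: "brw_ext mu n = Phi z" using Suc unfolding z_def by blast
  define e where "e a = measure_pmf.expectation (mu a) (Phi z)" for a
  have eb: "0 \<le> e a \<and> e a \<le> 1" for a
    unfolding e_def by (rule E_bounds) (use Phi_bounds[OF zb] in blast)
  have key: "brw_ext mu (Suc n) g = prod_mset (image_mset e g)" for g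
  proof -
    define xs where "xs = (SOME xs. mset xs = g)"
    have xs: "mset xs = g" unfolding xs_def by (rule someI_ex[OF ex_mset])
    have E1: "brw_ext mu (Suc n) g = measure_pmf.expectation (brw_step_list mu xs) (Phi z)"
      by (simp add: brw_step_def xs_def IH)
    have nn: "0 \<le> brw_ext mu (Suc n) g" unfolding E1
      using E_bounds Phi_bounds[OF zb] by blast
    from E1 have "ennreal (brw_ext mu (Suc n) g) = (\<integral>\<^sup>+ h. ennreal (Phi z h) \<partial>brw_step_list mu xs)"
      using E_enn Phi_bounds[OF zb] by metis
    also have "\<dots> = prod_list (map (\<lambda>a. \<integral>\<^sup>+ f. ennreal (Phi z f) \<partial>mu a) xs)"
      by (rule L[OF zb])
    also have "\<dots> = prod_list (map (\<lambda>a. ennreal (e a)) xs)"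
      unfolding e_def using E_enn Phi_bounds[OF zb] by metis
    also have "\<dots> = prod_mset (image_mset (\<lambda>a. ennreal (e a)) g)"
      by (simp flip: xs prod_mset_prod_list)
    also have "\<dots> = ennreal (prod_mset (image_mset e g))"
      by (rule ennreal_prod_mset) (use eb in blast)
    finally show ?thesis
      by (subst (asm) ennreal_inj) (auto intro!: prod_mset_nonneg' simp: eb nn simp del: brw_ext.simps)
  qed
  have "brw_ext mu (Suc n) {#w#} = e w" for w using key[of "{#w#}"] by simp
  then show ?case using key eb by (simp add: Phi_def del: brw_ext.simps)
qed

lemma brw_ext_G:
  "brw_ext mu (Suc n) {#w#} = brw_G mu (\<lambda>w. brw_ext mu n {#w#}) w"
proof -
  have "brw_ext mu n = Phi (\<lambda>w. brw_ext mu n {#w#})" using brw_mult by blast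
  moreover have "brw_step mu {#w#} = mu w"
  proof -
    have "(SOME xs. mset xs = {#w#}) = [w]"
      by (rule some_equality) auto
    then show ?thesis by (simp add: brw_step_def bind_return_pmf')
  qed
  ultimately show ?thesis by (simp add: brw_G_Phi)
qed


lemma inv_antimono: "(a::ennreal) \<le> b \<Longrightarrow> 1 / b \<le> 1 / a"
  by (metis divide_le_posI_ennreal divide_less_ennreal
    dual_order.order_iff_strict ennreal_zero_less_divide linorder_not_le
    one_divide_one_divide_ennreal zero_le)

lemma odds_le:
  assumes "0 \<le> a" "a \<le> 1" "odds a \<le> M"
  shows "1 / (1 + M) \<le> ennreal (1 - a)"
proof (cases "a = 1")
  case True
  then have "M = \<infinity>" using assms by (simp add: odds_def top_unique)
  then show ?thesis by simp
next
  case False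
  then have a1: "a < 1" using assms by simp
  have r: "1/(1-a) = 1 + a/(1-a)" using a1 by (simp add: field_simps)
  have "ennreal (1/(1-a)) = ennreal 1 + ennreal (a/(1-a))" unfolding r
    using a1 assms by (intro ennreal_plus) auto
  then have "ennreal (1 / (1 - a)) = 1 + ennreal (a / (1 - a))" by simp
  also have "\<dots> \<le> 1 + M" using assms False by (simp add: odds_def add_left_mono)
  finally have h: "ennreal (1 / (1 - a)) \<le> 1 + M" .
  have "1 = ennreal (1 / (1 - a)) * ennreal (1 - a)"
    using a1 by (simp add: ennreal_mult[symmetric] del: ennreal_mult)
  also have "\<dots> \<le> (1 + M) * ennreal (1 - a)" by (rule mult_right_mono[OF h]) simp
  finally show ?thesis
    by (intro divide_le_posI_ennreal) (auto simp: add_pos_nonneg)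
qed

lemma odds_eq:
  assumes "0 \<le> b" "b \<le> 1" "ennreal b = 1 / (1 + M)"
  shows "M = odds (1 - b)"
proof (cases "b = 0")
  case True
  then have "1 + M = \<infinity>" using assms by (simp add: ennreal_divide_eq_0_iff)
  then show ?thesis using True by (simp add: odds_def)
next
  case False
  then have "1 + M \<noteq> \<infinity>" using assms by auto
  then obtain m where m: "M = ennreal m" "0 \<le> m" by (cases M) auto
  have e1: "1 + ennreal m = ennreal (1 + m)" using m by simp
  have "1 / (1 + ennreal m) = ennreal (1/(1+m))" unfolding e1
    using m divide_ennreal[of 1 "1+m"] by simp
  then have "ennreal b = ennreal (1 / (1 + m))"
    using assms(3) m by simp
  then have "b = 1 / (1 + m)" using m assms by (simp add: ennreal_inj)
  then have "m = (1 - b) / b" using m False by (simp add: field_simps)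
  then show ?thesis using m False by (simp add: odds_def)
qed


context
  fixes mu :: "'x \<Rightarrow> 'x multiset pmf"
  assumes genfun: "\<And>z w. (\<forall>y. 0 \<le> z y \<and> z y \<le> 1) \<Longrightarrow>
       ennreal (brw_G mu z w) = 1 / (1 + (\<integral>\<^sup>+ y. brw_m mu w y * ennreal (1 - z y) \<partial>count_space UNIV))"
begin

lemma G_nonneg: assumes "\<forall>y. 0 \<le> z y \<and> z y \<le> 1" shows "0 \<le> brw_G mu z w"
  unfolding brw_G_Phi by (rule E_bounds[THEN conjunct1]) (use Phi_bounds[OF assms] in blast)

lemma G_mono:
  assumes "\<forall>y. 0 \<le> z y \<and> z y \<le> 1" "\<forall>y. 0 \<le> z' y \<and> z' y \<le> 1" "\<forall>y. z y \<le> z' y"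
  shows "brw_G mu z w \<le> brw_G mu z' w"
proof -
  have "(\<integral>\<^sup>+ y. brw_m mu w y * ennreal (1 - z' y) \<partial>count_space UNIV)
      \<le> (\<integral>\<^sup>+ y. brw_m mu w y * ennreal (1 - z y) \<partial>count_space UNIV)"
    using assms by (intro nn_integral_mono mult_left_mono ennreal_leI) auto
  then have "ennreal (brw_G mu z w) \<le> ennreal (brw_G mu z' w)"
    unfolding genfun[OF assms(1)] genfun[OF assms(2)]
    by (intro inv_antimono add_left_mono)
  then show ?thesis using G_nonneg[OF assms(2)] by (simp add: ennreal_le_iff)
qed

lemma q_bounds: "0 \<le> brw_ext mu n {#w#} \<and> brw_ext mu n {#w#} \<le> 1"
  using brw_mult[of mu n] by blast

lemma suff:
  assumes vb: "\<forall>y. 0 \<le> v y \<and> v y \<le> 1" and vx: "v x > 0"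
    and vM: "\<forall>y. brw_M mu v y \<ge> odds (v y)"
  shows "global_survival mu x"
proof -
  define z where "z y = 1 - v y" for y
  have zb: "\<forall>y. 0 \<le> z y \<and> z y \<le> 1" using vb by (simp add: z_def)
  have Gz: "brw_G mu z y \<le> z y" for y
  proof -
    have I: "(\<integral>\<^sup>+ w. brw_m mu y w * ennreal (1 - z w) \<partial>count_space UNIV) = brw_M mu v y"
      by (simp add: z_def brw_M_def)
    have "ennreal (brw_G mu z y) \<le> ennreal (z y)"
      unfolding genfun[OF zb] z_def using vb vM by (intro odds_le) (auto simp: brw_M_def)
    then show ?thesis using zb by (simp add: ennreal_le_iff)
  qed
  have qz: "\<forall>y. brw_ext mu n {#y#} \<le> z y" for n
  proof (induction n)
    case 0 then show ?case using zb by simp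
  next
    case (Suc n)
    show ?case
    proof
      fix y
      have "brw_ext mu (Suc n) {#y#} = brw_G mu (\<lambda>w. brw_ext mu n {#w#}) y"
        by (rule brw_ext_G)
      also have "\<dots> \<le> brw_G mu z y"
        using Suc zb q_bounds by (intro G_mono) auto
      also have "\<dots> \<le> z y" by (rule Gz)
      finally show "brw_ext mu (Suc n) {#y#} \<le> z y" .
    qed
  qed
  have "(SUP n. brw_ext mu n {#x#}) \<le> z x"
    using qz by (intro cSUP_least) auto
  also have "\<dots> < 1" using vx by (simp add: z_def)
  finally show ?thesis unfolding global_survival_def .
qed

lemma nec:
  assumes surv: "global_survival mu x"
  shows "\<exists>v. (\<forall>y. 0 \<le> v y \<and> v y \<le> 1) \<and> v x > 0 \<and> (\<forall>y. brw_M mu v y = odds (v y))"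
proof -
  have inc: "\<forall>w. brw_ext mu n {#w#} \<le> brw_ext mu (Suc n) {#w#}" for n
  proof (induction n)
    case 0 then show ?case using q_bounds[of "Suc 0"]
      by (auto simp del: brw_ext.simps simp add: brw_ext.simps(1))
  next
    case (Suc n)
    show ?case
    proof
      fix w
      have "brw_ext mu (Suc n) {#w#} = brw_G mu (\<lambda>w. brw_ext mu n {#w#}) w"
        by (rule brw_ext_G)
      also have "\<dots> \<le> brw_G mu (\<lambda>w. brw_ext mu (Suc n) {#w#}) w"
        using Suc q_bounds[of n] q_bounds[of "Suc n"]
        by (intro G_mono) (auto simp del: brw_ext.simps)
      also have "\<dots> = brw_ext mu (Suc (Suc n)) {#w#}"
        by (rule brw_ext_G[symmetric])
      finally show "brw_ext mu (Suc n) {#w#} \<le> brw_ext mu (Suc (Suc n)) {#w#}" .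
    qed
  qed
  define Q where "Q w = (SUP n. brw_ext mu n {#w#})" for w
  have bdd: "bdd_above (range (\<lambda>n. brw_ext mu n {#w#}))" for w
    using q_bounds by (intro bdd_aboveI[where M=1]) auto
  have lim: "(\<lambda>n. brw_ext mu n {#w#}) \<longlonglongrightarrow> Q w" for w
    unfolding Q_def using inc bdd by (intro LIMSEQ_incseq_SUP incseq_SucI) auto
  have Qb: "\<forall>y. 0 \<le> Q y \<and> Q y \<le> 1"
  proof
    fix y
    have "0 \<le> brw_ext mu 0 {#y#}" by simp
    also have "\<dots> \<le> Q y" unfolding Q_def by (rule cSUP_upper[OF _ bdd]) auto
    finally show "0 \<le> Q y \<and> Q y \<le> 1"
      using q_bounds by (auto simp: Q_def intro!: cSUP_least)
  qed
  have fixp: "brw_G mu Q w = Q w" for w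
  proof -
    have "(\<lambda>n. measure_pmf.expectation (mu w) (Phi (\<lambda>w. brw_ext mu n {#w#})))
        \<longlonglongrightarrow> measure_pmf.expectation (mu w) (Phi Q)"
    proof (rule integral_dominated_convergence[where w="\<lambda>_. 1"])
      show "AE f in measure_pmf (mu w). (\<lambda>n. Phi (\<lambda>w. brw_ext mu n {#w#}) f) \<longlonglongrightarrow> Phi Q f"
        unfolding Phi_def image_prod_mset_multiplicity
        by (intro AE_I2 tendsto_prod tendsto_power lim)
      show "AE f in measure_pmf (mu w). norm (Phi (\<lambda>w. brw_ext mu n {#w#}) f) \<le> 1" for n
        using Phi_bounds[of "\<lambda>w. brw_ext mu n {#w#}"] q_bounds by (intro AE_I2) auto
    qed auto
    then have "(\<lambda>n. brw_ext mu (Suc n) {#w#}) \<longlonglongrightarrow> brw_G mu Q w"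
      by (simp only: brw_ext_G brw_G_Phi)
    moreover have "(\<lambda>n. brw_ext mu (Suc n) {#w#}) \<longlonglongrightarrow> Q w"
      using lim by (rule LIMSEQ_Suc)
    ultimately show ?thesis by (rule LIMSEQ_unique)
  qed
  define v where "v y = 1 - Q y" for y
  have "v x > 0" using surv unfolding global_survival_def v_def Q_def by simp
  moreover have "\<forall>y. 0 \<le> v y \<and> v y \<le> 1" using Qb by (simp add: v_def)
  moreover have "brw_M mu v y = odds (v y)" for y
  proof -
    have I: "(\<integral>\<^sup>+ w. brw_m mu y w * ennreal (1 - Q w) \<partial>count_space UNIV) = brw_M mu v y"
      by (simp add: v_def brw_M_def)
    have "ennreal (Q y) = 1 / (1 + brw_M mu v y)"
      using genfun[OF Qb, of y] fixp[of y] I by simp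
    then show ?thesis unfolding v_def using Qb by (intro odds_eq) auto
  qed
  ultimately show ?thesis by (intro exI[of _ v]) simp
qed

end



theorem mainTheorem12:
  fixes mu :: "'x::countable \<Rightarrow> 'x multiset pmf" and x :: 'x
  assumes bounded: "\<exists>C::real. \<forall>w. (\<integral>\<^sup>+ y. brw_m mu w y \<partial>count_space UNIV) \<le> ennreal C"
    and genfun: "\<And>z w. (\<forall>y. 0 \<le> z y \<and> z y \<le> 1) \<Longrightarrow>
       ennreal (brw_G mu z w) = 1 / (1 + (\<integral>\<^sup>+ y. brw_m mu w y * ennreal (1 - z y) \<partial>count_space UNIV))"
  shows "(global_survival mu x \<longleftrightarrow>
           (\<exists>v. (\<forall>y. 0 \<le> v y \<and> v y \<le> 1) \<and> v x > 0 \<and> (\<forall>y. brw_M mu v y \<ge> odds (v y))))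
       \<and> (global_survival mu x \<longleftrightarrow>
           (\<exists>v. (\<forall>y. 0 \<le> v y \<and> v y \<le> 1) \<and> v x > 0 \<and> (\<forall>y. brw_M mu v y = odds (v y))))"
  proof -
  have N: "\<exists>v. (\<forall>y. 0 \<le> v y \<and> v y \<le> 1) \<and> v x > 0 \<and> (\<forall>y. brw_M mu v y = odds (v y))"
    if "global_survival mu x" using nec[OF genfun that] .
  have S: "global_survival mu x"
    if "\<exists>v. (\<forall>y. 0 \<le> v y \<and> v y \<le> 1) \<and> v x > 0 \<and> (\<forall>y. brw_M mu v y \<ge> odds (v y))"
  proof -
    from that obtain v where "\<forall>y. 0 \<le> v y \<and> v y \<le> 1" "v x > 0" "\<forall>y. brw_M mu v y \<ge> odds (v y)"
      by blast
    then show ?thesis using suff[OF genfun, of v x] by blast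
  qed
  have E: "\<exists>v. (\<forall>y. 0 \<le> v y \<and> v y \<le> 1) \<and> v x > 0 \<and> (\<forall>y. brw_M mu v y \<ge> odds (v y))"
    if "\<exists>v. (\<forall>y. 0 \<le> v y \<and> v y \<le> 1) \<and> v x > 0 \<and> (\<forall>y. brw_M mu v y = odds (v y))"
  proof -
    from that obtain v where "\<forall>y. 0 \<le> v y \<and> v y \<le> 1" "v x > 0" "\<forall>y. brw_M mu v y = odds (v y)"
      by blast
    then show ?thesis by (intro exI[of _ v]) simp
  qed
  show ?thesis using N S E by blast
qed

end
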